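(* Let $0<\lambda<1$ and $0<p<1$. Let \[ f(z)=\frac{z}{1-\frac{z}{p}+\lambda z\int_z^p\omega(t)\,dt}, \] where $\omega$ is analytic in $\mathbb{D}=\{z:|z|<1\}$ with $|\omega(z)|\le1$ on $\mathbb{D}$, so that $f\in\mathcal{U}_m(\lambda)$ has a simple pole at $z=p$, and let $f(z)=\sum_{k=-1}^\infty b_k(z-p)^k$ be the Laurent series of $f$ at $z=p$. Then, as $\omega$ ranges over all such functions, the region of variability of the residue $b_{-1}$ is the disk \[ \left\{\frac{-p^2}{1+\lambda p^2u}:\ u\in\overline{\mathbb{D}}\right\}, \] and \[ \frac{p^2}{1+\lambda p^2}\le |b_{-1}|\le \frac{p^2}{1-\lambda p^2}, \] where the upper bound is sharp, with equality attained when $\omega(z)\equiv -1$.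
   Context: For $\lambda\in(0,1)$ and $p\in(0,1)$, $\mathcal{U}_m(\lambda)$ denotes the family of functions $f$ meromorphic in $\mathbb{D}$ with a pole at $z=p$, having a Taylor expansion $f(z)=z+\sum_{k=2}^\infty a_k z^k$ for $|z|<p$, and satisfying $\left|\frac{z}{f(z)}-z\left(\frac{z}{f(z)}\right)'-1\right|<\lambda$ for every $z\in\mathbb{D}$. The integral is along any path in $\mathbb{D}$ from $z$ to $p$. *)

theory Defs
  imports "HOL-Complex_Analysis.Complex_Analysis"
begin

text \<open>The function f(z) = z / (1 - z/p + lam z int_z^p omega(t) dt), the integral taken
  along the straight segment from z to p (any path in the disc gives the same value).\<close>
definition fUm :: "real \<Rightarrow> real \<Rightarrow> (complex \<Rightarrow> complex) \<Rightarrow> complex \<Rightarrow> complex" where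
  "fUm lam p \<omega> z = z / (1 - z / complex_of_real p
      + complex_of_real lam * z * contour_integral (linepath z (complex_of_real p)) \<omega>)"

definition admissible_omega :: "(complex \<Rightarrow> complex) \<Rightarrow> bool" where
  "admissible_omega \<omega> \<longleftrightarrow> \<omega> holomorphic_on ball 0 1 \<and> (\<forall>z\<in>ball 0 1. norm (\<omega> z) \<le> 1)"

end

theory Submission
  imports Defs
begin

lemma denom_nz:
  fixes lam p :: real and u :: complex
  assumes "0 < lam" "lam < 1" "0 < p" "p < 1" "norm u \<le> 1"
  shows "1 + complex_of_real (lam * p^2) * u \<noteq> 0"
    and "1 - lam * p^2 \<le> norm (1 + complex_of_real (lam * p^2) * u)"
    and "norm (1 + complex_of_real (lam * p^2) * u) \<le> 1 + lam * p^2"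
    and "0 < 1 - lam * p^2"
proof -
  have pp: "p^2 < 1" using assms by (simp add: power_less_one_iff abs_less_iff)
  have lp: "0 < lam * p^2" "lam * p^2 < 1" using assms pp
    by (auto intro!: mult_pos_pos) (metis less_trans mult_less_cancel_left_pos mult.right_neutral)
  have nu: "norm (complex_of_real (lam * p^2) * u) \<le> lam * p^2"
    using lp assms by (simp add: norm_mult norm_power mult_left_le)
  have "norm (1::complex) - norm (complex_of_real (lam * p^2) * u) \<le> norm (1 + complex_of_real (lam * p^2) * u)"
    by (metis norm_diff_ineq)
  then show 2: "1 - lam * p^2 \<le> norm (1 + complex_of_real (lam * p^2) * u)" using nu by simp
  show "norm (1 + complex_of_real (lam * p^2) * u) \<le> 1 + lam * p^2"
    using norm_triangle_ineq[of 1 "complex_of_real (lam * p^2) * u"] nu by simp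
  show "0 < 1 - lam * p^2" using lp by simp
  then show "1 + complex_of_real (lam * p^2) * u \<noteq> 0" using 2 by auto
qed

lemma key:
  fixes lam p :: real
  assumes "0 < lam" "lam < 1" "0 < p" "p < 1" "admissible_omega \<omega>"
  shows "residue (fUm lam p \<omega>) (complex_of_real p)
           = - ((complex_of_real p)^2) / (1 + complex_of_real (lam * p^2) * \<omega> (complex_of_real p))"
proof -
  let ?S = "ball (0::complex) 1"
  let ?p = "complex_of_real p"
  have holo: "\<omega> holomorphic_on ?S" and bd: "\<And>z. z \<in> ?S \<Longrightarrow> norm (\<omega> z) \<le> 1"
    using assms(5) unfolding admissible_omega_def by auto
  obtain W where W: "\<And>x. x \<in> ?S \<Longrightarrow> (W has_field_derivative \<omega> x) (at x within ?S)"
    using holomorphic_convex_primitive'[OF convex_ball open_ball holo] by blast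
  have W': "\<And>x. x \<in> ?S \<Longrightarrow> (W has_field_derivative \<omega> x) (at x)"
    using W by (metis at_within_open open_ball)
  have pS: "?p \<in> ?S" using assms by simp
  have ci: "contour_integral (linepath z ?p) \<omega> = W ?p - W z" if "z \<in> ?S" for z
  proof -
    have "path_image (linepath z ?p) \<subseteq> ?S"
      using that pS by (simp add: closed_segment_subset convex_ball)
    from contour_integral_primitive[OF W valid_path_linepath this]
    show ?thesis by (intro contour_integral_unique) simp
  qed
  define g where "g z = 1 - z / ?p + complex_of_real lam * z * (W ?p - W z)" for z
  have Wh: "W holomorphic_on ?S"
    using W' holomorphic_on_open open_ball by blast
  have gh: "g holomorphic_on ?S" unfolding g_def
    by (intro holomorphic_intros Wh) (use assms in auto)
  have gd: "(g has_field_derivative (- 1 / ?p - complex_of_real lam * ?p * \<omega> ?p)) (at ?p)"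
  proof -
    have "(g has_field_derivative (0 - 1 / ?p + (complex_of_real lam * 1 * (W ?p - W ?p)
            + complex_of_real lam * ?p * (0 - \<omega> ?p)))) (at ?p)"
      unfolding g_def
      using W'[OF pS] assms by (intro derivative_eq_intros) auto
    then show ?thesis by (simp add: algebra_simps)
  qed
  have g0: "g ?p = 0" unfolding g_def using assms by simp
  have nz: "1 + complex_of_real (lam * p^2) * \<omega> ?p \<noteq> 0"
    using denom_nz(1)[OF assms(1-4) bd[OF pS]] .
  have gnz: "- 1 / ?p - complex_of_real lam * ?p * \<omega> ?p \<noteq> 0"
  proof
    assume "- 1 / ?p - complex_of_real lam * ?p * \<omega> ?p = 0"
    then have "?p * (- 1 / ?p - complex_of_real lam * ?p * \<omega> ?p) = 0" by simp
    then have "1 + complex_of_real (lam * p^2) * \<omega> ?p = 0"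
      using assms by (simp add: algebra_simps power2_eq_square) (metis add.right_inverse)
    with nz show False by simp
  qed
  have ev: "eventually (\<lambda>z. fUm lam p \<omega> z = id z / g z) (at ?p)"
  proof -
    have "eventually (\<lambda>z. z \<in> ?S) (at ?p)"
      using pS by (intro eventually_at_in_open') auto
    then show ?thesis
      by eventually_elim (simp add: fUm_def g_def ci)
  qed
  have "residue (fUm lam p \<omega>) ?p = residue (\<lambda>z. id z / g z) ?p"
    by (rule residue_cong[OF ev refl])
  also have "\<dots> = id ?p / (- 1 / ?p - complex_of_real lam * ?p * \<omega> ?p)"
    by (rule residue_simple_pole_deriv[OF _ gh open_ball connected_ball pS gd _ g0 gnz])
       (use assms in auto)
  also have "\<dots> = - (?p^2) / (1 + complex_of_real (lam * p^2) * \<omega> ?p)"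
    using nz gnz assms by (simp add: field_simps power2_eq_square)
  finally show ?thesis .
qed

theorem corollary2:
  fixes lam p :: real
  assumes "0 < lam" "lam < 1" "0 < p" "p < 1"
  shows "{residue (fUm lam p \<omega>) (complex_of_real p) | \<omega>. admissible_omega \<omega>}
           = (\<lambda>u. - ((complex_of_real p)^2) / (1 + complex_of_real (lam * p^2) * u)) ` cball 0 1
      \<and> (\<forall>\<omega>. admissible_omega \<omega> \<longrightarrow>
           p^2 / (1 + lam * p^2) \<le> norm (residue (fUm lam p \<omega>) (complex_of_real p)) \<and>
           norm (residue (fUm lam p \<omega>) (complex_of_real p)) \<le> p^2 / (1 - lam * p^2))
      \<and> admissible_omega (\<lambda>_. -1)
      \<and> norm (residue (fUm lam p (\<lambda>_. -1)) (complex_of_real p)) = p^2 / (1 - lam * p^2)"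
proof (intro conjI allI impI)
  have pS: "complex_of_real p \<in> ball 0 1" using assms by simp
  have adm_const: "admissible_omega (\<lambda>_. u)" if "norm u \<le> 1" for u
    using that unfolding admissible_omega_def by auto
  have bdw: "norm (\<omega> (complex_of_real p)) \<le> 1" if "admissible_omega \<omega>" for \<omega>
    using that pS unfolding admissible_omega_def by auto
  have nr: "norm (- ((complex_of_real p)^2) / (1 + complex_of_real (lam * p^2) * u))
      = p^2 / norm (1 + complex_of_real (lam * p^2) * u)" for u
    by (simp add: norm_divide norm_power)
  show "{residue (fUm lam p \<omega>) (complex_of_real p) | \<omega>. admissible_omega \<omega>}
           = (\<lambda>u. - ((complex_of_real p)^2) / (1 + complex_of_real (lam * p^2) * u)) ` cball 0 1"
  proof (rule set_eqI, rule iffI)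
    fix x assume "x \<in> {residue (fUm lam p \<omega>) (complex_of_real p) | \<omega>. admissible_omega \<omega>}"
    then obtain \<omega> where "admissible_omega \<omega>" "x = residue (fUm lam p \<omega>) (complex_of_real p)" by blast
    then show "x \<in> (\<lambda>u. - ((complex_of_real p)^2) / (1 + complex_of_real (lam * p^2) * u)) ` cball 0 1"
      using key[OF assms] bdw by (intro image_eqI[where x="\<omega> (complex_of_real p)"]) auto
  next
    fix x assume "x \<in> (\<lambda>u. - ((complex_of_real p)^2) / (1 + complex_of_real (lam * p^2) * u)) ` cball 0 1"
    then obtain u where u: "norm u \<le> 1" "x = - ((complex_of_real p)^2) / (1 + complex_of_real (lam * p^2) * u)"
      by auto
    then show "x \<in> {residue (fUm lam p \<omega>) (complex_of_real p) | \<omega>. admissible_omega \<omega>}"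
    proof -
      have "x = residue (fUm lam p (\<lambda>_. u)) (complex_of_real p)"
        using key[OF assms adm_const[OF u(1)]] u by simp
      then show ?thesis using adm_const[OF u(1)] by blast
    qed
  qed
  fix \<omega> assume a: "admissible_omega \<omega>"
  note d = denom_nz[OF assms bdw[OF a]]
  have pp: "0 < p^2" using assms by simp
  show "p^2 / (1 + lam * p^2) \<le> norm (residue (fUm lam p \<omega>) (complex_of_real p))"
    unfolding key[OF assms a] nr
    by (rule divide_left_mono) (use d pp in auto)
  show "norm (residue (fUm lam p \<omega>) (complex_of_real p)) \<le> p^2 / (1 - lam * p^2)"
    unfolding key[OF assms a] nr
    by (rule divide_left_mono) (use d pp in auto)
next
  show "admissible_omega (\<lambda>_. -1)" unfolding admissible_omega_def by auto
  then show "norm (residue (fUm lam p (\<lambda>_. -1)) (complex_of_real p)) = p^2 / (1 - lam * p^2)"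
  proof -
    have pos: "0 < 1 - lam * p^2" using denom_nz(4)[OF assms, of 0] by simp
    have e: "1 + complex_of_real (lam * p^2) * (-1) = complex_of_real (1 - lam * p^2)" by simp
    show ?thesis unfolding key[OF assms \<open>admissible_omega (\<lambda>_. -1)\<close>] e
      using pos by (simp only: norm_divide norm_minus_cancel norm_power norm_of_real abs_of_pos) (simp add: power2_eq_square)
  qed
qed

end
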